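(* For every $n\ge 1$, the map $\Phi=\varphi\circ\Theta$ described below is a bijection from the set of reduced plane trees with $n+1$ leaves onto the set of parking quasi-ribbons of length $n$. (i) Binary trees: a binary tree is either empty or a node with an ordered pair (left subtree, right subtree) of binary trees; $|T|$ is its number of nodes. Define a word $\varphi(T)$ of length $|T|$, each letter being attached to one node: $\varphi(\emptyset)$ is the empty word, and if $T$ has left subtree $T_1$ and right subtree $T_2$, then $$\varphi(T)=\varphi(T_2)\cdot\big(\varphi(T_1)[M-1]\big)\cdot(|T_1|+M),$$ where $M$ is the largest letter of $\varphi(T_2)$ if $T_2\neq\emptyset$ and $M=1$ if $T_2=\emptyset$, $w[k]$ denotes the word obtained by adding $k$ to every letter of $w$, the dot is concatenation, and the final letter $|T_1|+M$ is attached to the root of $T$ (the letters of the first two blocks being attached to the nodes of $T_2$ and $T_1$ as in the recursive construction). (ii) Marked binary trees: a binary tree in which each edge joining a node to its left child is either normal or marked. For such a tree, $\varphi$ of the underlying binary tree is computed, and a bar is inserted immediately before the letter attached to each node whose left edge is marked. (iii) The map $\Theta$ from reduced plane trees to marked binary trees is defined recursively: the single-leaf tree goes to the empty tree; if the root has exactly two children subtrees $T_1,T_2$, $\Theta$ gives a node with left subtree $\Theta(T_1)$ and right subtree $\Theta(T_2)$, the left edge (if any) being normal; if the root has children subtrees $T_1,\dots,T_r$ with $r\ge3$, $\Theta$ gives a node with right subtree $\Theta(T_r)$ and left subtree $\Theta(T')$, joined by a marked left edge, where $T'$ is the tree whose root has children subtrees $T_1,\dots,T_{r-1}$.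
   Context: A reduced plane tree is a rooted plane tree in which every internal vertex has at least two children. A nondecreasing parking function of length $n$ is a word $a_1a_2\cdots a_n$ of positive integers with $a_1\le a_2\le\cdots\le a_n$ and $a_i\le i$ for all $i$. A parking quasi-ribbon of length $n$ is a nondecreasing parking function of length $n$ together with a (possibly empty) set of bars placed between some consecutive letters $a_i,a_{i+1}$, only at positions where $a_i<a_{i+1}$ (for example $11|244|5566|8$). *)

theory Defs
  imports Main
begin

datatype ptree = PNode "ptree list"

fun leaves :: "ptree \<Rightarrow> nat" where
  "leaves (PNode []) = 1"
| "leaves (PNode (t # ts)) = sum_list (map leaves (t # ts))"

fun reduced :: "ptree \<Rightarrow> bool" where
  "reduced (PNode ts) = ((ts = [] \<or> 2 \<le> length ts) \<and> (\<forall>t\<in>set ts. reduced t))"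

datatype btree = BLeaf | BNode btree btree   (* BNode left right *)

fun bsize :: "btree \<Rightarrow> nat" where
  "bsize BLeaf = 0"
| "bsize (BNode l r) = Suc (bsize l + bsize r)"

fun phi :: "btree \<Rightarrow> nat list" where
  "phi BLeaf = []"
| "phi (BNode l r) =
     (let w2 = phi r; M = (if r = BLeaf then 1 else Max (set w2))
      in w2 @ map (\<lambda>x. x + (M - 1)) (phi l) @ [bsize l + M])"

text \<open>Marked binary tree: the boolean says whether the edge from the node to its
  left child is marked.\<close>
datatype mtree = MLeaf | MNode bool mtree mtree   (* MNode marked left right *)

fun forget :: "mtree \<Rightarrow> btree" where
  "forget MLeaf = BLeaf"
| "forget (MNode b l r) = BNode (forget l) (forget r)"

text \<open>For each node, in the same order as the letters of \<phi> are attached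
  (right subtree nodes, left subtree nodes, root): is its left edge marked?\<close>
fun marks :: "mtree \<Rightarrow> bool list" where
  "marks MLeaf = []"
| "marks (MNode b l r) = marks r @ marks l @ [b]"

text \<open>\<phi> on marked binary trees: the word together with the set of bar positions,
  a bar at position i (0-based) meaning a bar immediately before letter i.\<close>
definition phiM :: "mtree \<Rightarrow> nat list \<times> nat set" where
  "phiM T = (phi (forget T), {i. i < length (marks T) \<and> marks T ! i})"

lemma size_list_butlast_less:
  "ts \<noteq> [] \<Longrightarrow> size_list f (butlast ts) < size_list f ts + 1"
  by (induction ts) auto

lemma size_list_butlast_lt:
  "ts \<noteq> [] \<Longrightarrow> size_list (f::'a \<Rightarrow> nat) (butlast ts) < size_list f ts"
  by (induction ts) auto

lemma size_last_le: "ts \<noteq> [] \<Longrightarrow> (f::'a \<Rightarrow> nat) (last ts) \<le> size_list f ts"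
  by (induction ts) auto

function theta :: "ptree \<Rightarrow> mtree" and thetaL :: "ptree list \<Rightarrow> mtree" where
  "theta (PNode ts) = thetaL ts"
| "thetaL [] = MLeaf"
| "thetaL [t] = MLeaf"  (* not reached for reduced trees *)
| "thetaL [t1, t2] = MNode False (theta t1) (theta t2)"
| "thetaL (t1 # t2 # t3 # ts) =
     MNode True (thetaL (butlast (t1 # t2 # t3 # ts))) (theta (last (t1 # t2 # t3 # ts)))"
  by pat_completeness auto
termination
  apply (relation "measure (\<lambda>x. case x of Inl t \<Rightarrow> size t | Inr ts \<Rightarrow> size_list size ts)")
      apply simp
     apply simp
    apply simp
   apply simp
  subgoal for t1 t2 t3 ts
    using size_list_butlast_lt[of "t1 # t2 # t3 # ts" size] by simp
  subgoal for t1 t2 t3 ts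
    using size_last_le[of ts size] by (cases "ts = []") auto
  done

definition nd_parking :: "nat \<Rightarrow> nat list \<Rightarrow> bool" where
  "nd_parking n w \<longleftrightarrow> length w = n \<and> sorted w \<and> (\<forall>i<n. 1 \<le> w ! i \<and> w ! i \<le> i + 1)"

text \<open>Bar set B: a bar at position i means a bar between letters i-1 and i (0-based),
  allowed only when w!(i-1) < w!i.\<close>
definition parking_quasi_ribbon :: "nat \<Rightarrow> nat list \<Rightarrow> nat set \<Rightarrow> bool" where
  "parking_quasi_ribbon n w B \<longleftrightarrow> nd_parking n w \<and>
     B \<subseteq> {i. 0 < i \<and> i < n \<and> w ! (i - 1) < w ! i}"

definition Phi :: "ptree \<Rightarrow> nat list \<times> nat set" where
  "Phi t = phiM (theta t)"

end

theory Submission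
  imports Defs
begin


fun children :: "ptree \<Rightarrow> ptree list" where "children (PNode ts) = ts"

fun untheta :: "mtree \<Rightarrow> ptree" where
  "untheta MLeaf = PNode []"
| "untheta (MNode b l r) = (if b then PNode (children (untheta l) @ [untheta r])
                            else PNode [untheta l, untheta r])"

fun valid :: "mtree \<Rightarrow> bool" where
  "valid MLeaf = True"
| "valid (MNode b l r) = ((b \<longrightarrow> l \<noteq> MLeaf) \<and> valid l \<and> valid r)"

lemma leaves_ne: "ts \<noteq> [] \<Longrightarrow> leaves (PNode ts) = sum_list (map leaves ts)"
  by (cases ts) auto

lemma untheta_ch: "valid T \<Longrightarrow> T \<noteq> MLeaf \<Longrightarrow> 2 \<le> length (children (untheta T))"
  by (induction T) auto

lemma thetaL_snoc: "2 \<le> length cs \<Longrightarrow> thetaL (cs @ [x]) = MNode True (thetaL cs) (theta x)"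
proof -
  assume "2 \<le> length cs"
  then obtain a1 a2 cs' where cse: "cs = a1 # a2 # cs'"
    by (metis Suc_le_length_iff numeral_2_eq_2)
  obtain c rest where cr: "cs' @ [x] = c # rest" by (cases "cs' @ [x]") auto
  have e: "cs @ [x] = a1 # a2 # c # rest" using cse cr by simp
  have "butlast (a1 # a2 # c # rest) = cs" "last (a1 # a2 # c # rest) = x"
    using e by (metis butlast_snoc, metis last_snoc)
  then show ?thesis unfolding e by simp
qed

lemma untheta_props: "valid T \<Longrightarrow> reduced (untheta T) \<and> leaves (untheta T) = bsize (forget T) + 1
   \<and> theta (untheta T) = T"
proof (induction T)
  case MLeaf then show ?case by simp
next
  case (MNode b l r)
  show ?case
  proof (cases b)
    case True
    with MNode have ln: "l \<noteq> MLeaf" by simp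
    obtain cs where cs: "untheta l = PNode cs" by (cases "untheta l") auto
    have c2: "2 \<le> length cs" using untheta_ch[OF _ ln] MNode cs by simp
    then obtain a1 a2 cs' where cse: "cs = a1 # a2 # cs'"
      by (metis Suc_le_length_iff numeral_2_eq_2)
    have red: "reduced (PNode cs)" "leaves (PNode cs) = bsize (forget l) + 1" "theta (PNode cs) = l"
      using MNode cs by auto
    have "reduced (untheta (MNode b l r))" using True red MNode c2 cs by auto
    moreover have "leaves (untheta (MNode b l r)) = bsize (forget (MNode b l r)) + 1"
      using True red MNode cs c2 by (simp add: leaves_ne cse)
    moreover have "theta (untheta (MNode b l r)) = MNode b l r"
      using True red MNode cs c2 by (simp add: thetaL_snoc)
    ultimately show ?thesis by blast
  next
    case False
    then show ?thesis using MNode by (simp add: leaves_ne)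
  qed
qed

lemma theta_props:
  "reduced t \<longrightarrow> valid (theta t) \<and> untheta (theta t) = t"
  "(\<forall>t\<in>set ts. reduced t) \<and> 2 \<le> length ts \<longrightarrow> valid (thetaL ts) \<and> thetaL ts \<noteq> MLeaf \<and> untheta (thetaL ts) = PNode ts"
proof (induction t and ts rule: theta_thetaL.induct)
  case (1 ts)
  then show ?case by auto
next
  case 2 then show ?case by simp
next
  case (3 t) then show ?case by simp
next
  case (4 t1 t2) then show ?case by simp
next
  case (5 t1 t2 t3 ts)
  let ?xs = "t1 # t2 # t3 # ts"
  have bl: "butlast ?xs @ [last ?xs] = ?xs" by (rule append_butlast_last_id) simp
  have s: "set (butlast ?xs) \<subseteq> set ?xs" by (simp add: in_set_butlastD subsetI)
  have lb: "2 \<le> length (butlast ?xs)" by simp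
  show ?case
  proof
    assume a: "(\<forall>t\<in>set ?xs. reduced t) \<and> 2 \<le> length ?xs"
    have h1: "valid (thetaL (butlast ?xs)) \<and> thetaL (butlast ?xs) \<noteq> MLeaf \<and> untheta (thetaL (butlast ?xs)) = PNode (butlast ?xs)"
      using 5(1) a s lb by blast
    have h2: "valid (theta (last ?xs)) \<and> untheta (theta (last ?xs)) = last ?xs"
      using 5(2) a by (metis last_in_set list.simps(3))
    show "valid (thetaL ?xs) \<and> thetaL ?xs \<noteq> MLeaf \<and> untheta (thetaL ?xs) = PNode ?xs"
      using h1 h2 bl by (simp only: thetaL.simps untheta.simps valid.simps children.simps) simp
  qed
qed

lemma theta_bij: "bij_betw theta {t. reduced t \<and> leaves t = n + 1} {T. valid T \<and> bsize (forget T) = n}"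
proof (rule bij_betw_byWitness[where f' = untheta])
  show "theta ` {t. reduced t \<and> leaves t = n + 1} \<subseteq> {T. valid T \<and> bsize (forget T) = n}"
  proof
    fix T assume "T \<in> theta ` {t. reduced t \<and> leaves t = n + 1}"
    then obtain t where T: "T = theta t" and "t \<in> {t. reduced t \<and> leaves t = n + 1}" by blast
    then have r: "reduced t" "leaves t = n+1" by auto
    have "valid (theta t)" "untheta (theta t) = t" using theta_props(1) r by auto
    moreover have "leaves (untheta (theta t)) = bsize (forget (theta t)) + 1"
      using untheta_props calculation by blast
    ultimately show "T \<in> {T. valid T \<and> bsize (forget T) = n}" using r T by simp
  qed
  show "untheta ` {T. valid T \<and> bsize (forget T) = n} \<subseteq> {t. reduced t \<and> leaves t = n + 1}"
    using untheta_props by auto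
  show "\<forall>x\<in>{t. reduced t \<and> leaves t = n + 1}. untheta (theta x) = x"
    using theta_props(1) by auto
  show "\<forall>y\<in>{T. valid T \<and> bsize (forget T) = n}. theta (untheta y) = y"
    using untheta_props by auto
qed




definition park :: "nat list \<Rightarrow> bool" where
  "park w \<longleftrightarrow> sorted w \<and> (\<forall>i<length w. 1 \<le> w ! i \<and> w ! i \<le> i + 1)"

lemma nd_parking_park: "nd_parking n w \<longleftrightarrow> length w = n \<and> park w"
  unfolding nd_parking_def park_def by auto

lemma sorted_Max_last: "sorted xs \<Longrightarrow> xs \<noteq> [] \<Longrightarrow> Max (set xs) = last xs"
proof (induction xs)
  case Nil then show ?case by simp
next
  case (Cons a xs)
  then show ?case by (cases "xs = []") (auto simp: max_def intro!: Max_insert)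
qed

lemma park_elems: "park L \<Longrightarrow> x \<in> set L \<Longrightarrow> 1 \<le> x \<and> x \<le> length L"
  unfolding park_def by (metis Suc_eq_plus1 Suc_leI in_set_conv_nth le_trans)

lemma park_last_le: "park A \<Longrightarrow> A \<noteq> [] \<Longrightarrow> last A \<le> length A \<and> 1 \<le> last A"
  using park_elems last_in_set by blast

lemma sorted_le_last: "sorted A \<Longrightarrow> x \<in> set A \<Longrightarrow> x \<le> last A"
  by (induction A) (auto simp: last_in_set)

lemma park_first: "park L \<Longrightarrow> L \<noteq> [] \<Longrightarrow> L ! 0 = 1"
  unfolding park_def by force

lemma park_append3:
  assumes pA: "park A" and pL: "park L"
    and M: "(A = [] \<longrightarrow> M = 1) \<and> (A \<noteq> [] \<longrightarrow> last A = M)"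
  shows "park (A @ map (\<lambda>x. x + (M - 1)) L @ [length L + M])"
proof -
  let ?k = "length A" and ?m = "length L"
  have M1: "1 \<le> M" and Mk: "M \<le> ?k + 1"
    using M park_last_le[OF pA] by (cases "A = []"; auto)+
  have sA: "sorted A" and sL: "sorted L" using pA pL park_def by auto
  have AM: "\<forall>x\<in>set A. x \<le> M" using M sA sorted_le_last by (metis empty_iff list.set(1))
  have Lb: "\<forall>x\<in>set L. 1 \<le> x \<and> x \<le> ?m" using park_elems pL by blast
  have srt: "sorted (A @ map (\<lambda>x. x + (M - 1)) L @ [length L + M])"
  proof -
    have "sorted (map (\<lambda>x. x + (M - 1)) L)"
      using sL by (auto simp: sorted_iff_nth_mono)
    moreover have "\<forall>x\<in>set A. \<forall>y\<in>set (map (\<lambda>x. x + (M - 1)) L). x \<le> y"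
      using AM Lb M1 by fastforce
    moreover have "\<forall>y\<in>set (A @ map (\<lambda>x. x + (M - 1)) L). y \<le> length L + M"
      using AM Lb M1 by fastforce
    ultimately show ?thesis using sA by (simp add: sorted_append)
  qed
  have bnd: "1 \<le> (A @ map (\<lambda>x. x + (M - 1)) L @ [?m + M]) ! i
      \<and> (A @ map (\<lambda>x. x + (M - 1)) L @ [?m + M]) ! i \<le> i + 1"
    if i: "i < ?k + ?m + 1" for i
  proof (cases "i < ?k")
    case True
    then show ?thesis using pA unfolding park_def by (simp add: nth_append)
  next
    case False
    show ?thesis
    proof (cases "i < ?k + ?m")
      case True
      then have j: "i - ?k < ?m" using False by simp
      have "1 \<le> L ! (i - ?k) \<and> L ! (i - ?k) \<le> i - ?k + 1" using pL j unfolding park_def by blast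
      have e: "(A @ map (\<lambda>x. x + (M - 1)) L @ [?m + M]) ! i = L ! (i - ?k) + (M - 1)"
        using False j by (simp add: nth_append)
      show ?thesis unfolding e using \<open>1 \<le> L ! (i - ?k) \<and> _\<close> False M1 Mk by linarith
    next
      case False
      then have "i = ?k + ?m" using i by simp
      then show ?thesis using Mk M1 by (simp add: nth_append)
    qed
  qed
  show ?thesis unfolding park_def using srt bnd by simp
qed

definition Mof :: "btree \<Rightarrow> nat" where
  "Mof r = (if r = BLeaf then 1 else last (phi r))"

lemma len_phi[simp]: "length (phi T) = bsize T"
  by (induction T) (auto simp: Let_def)

lemma phi_nil_iff: "phi r = [] \<longleftrightarrow> r = BLeaf"
  by (cases r) (auto simp: Let_def)

lemma phi_park: "park (phi T)"
proof (induction T)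
  case BLeaf then show ?case by (simp add: park_def)
next
  case (BNode l r)
  have MM: "(if r = BLeaf then 1 else Max (set (phi r))) = Mof r"
    using BNode(2) sorted_Max_last[of "phi r"] phi_nil_iff unfolding Mof_def park_def by auto
  have "park (phi r @ map (\<lambda>x. x + (Mof r - 1)) (phi l) @ [length (phi l) + Mof r])"
    using park_append3[OF BNode(2) BNode(1)] phi_nil_iff unfolding Mof_def by auto
  then show ?case using MM by (simp add: Let_def)
qed

lemma phi_BNode: "phi (BNode l r) = phi r @ map (\<lambda>x. x + (Mof r - 1)) (phi l) @ [bsize l + Mof r]"
proof -
  have MM: "(if r = BLeaf then 1 else Max (set (phi r))) = Mof r"
    using phi_park[of r] sorted_Max_last[of "phi r"] phi_nil_iff unfolding Mof_def park_def by auto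
  then show ?thesis by (simp add: Let_def)
qed




fun hl :: "btree \<Rightarrow> bool list" where
  "hl BLeaf = []"
| "hl (BNode l r) = hl r @ hl l @ [l \<noteq> BLeaf]"

lemma len_hl[simp]: "length (hl T) = bsize T"
  by (induction T) auto

lemma Mof_props: "1 \<le> Mof r \<and> Mof r \<le> bsize r + 1 \<and> (r \<noteq> BLeaf \<longrightarrow> last (phi r) = Mof r \<and> Mof r \<le> bsize r)"
  using park_last_le[OF phi_park[of r]] phi_nil_iff[of r] unfolding Mof_def by auto

lemma phi_first: "T \<noteq> BLeaf \<Longrightarrow> phi T ! 0 = 1"
  using park_first[OF phi_park] phi_nil_iff by blast

lemma phi_lastidx: "r \<noteq> BLeaf \<Longrightarrow> phi r ! (bsize r - 1) = Mof r"
  using Mof_props[of r] phi_nil_iff[of r] by (metis last_conv_nth len_phi)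

lemma hl_char: "i < bsize T \<Longrightarrow> (hl T ! i \<longleftrightarrow> (0 < i \<and> phi T ! (i - 1) < phi T ! i))"
proof (induction T arbitrary: i)
  case BLeaf then show ?case by simp
next
  case (BNode l r)
  let ?k = "bsize r" and ?m = "bsize l" and ?M = "Mof r"
  let ?w = "phi (BNode l r)"
  have w: "?w = phi r @ map (\<lambda>x. x + (?M - 1)) (phi l) @ [?m + ?M]" by (rule phi_BNode)
  have Mp: "1 \<le> ?M" "?M \<le> ?k + 1" "r \<noteq> BLeaf \<Longrightarrow> phi r ! (?k - 1) = ?M"
    using Mof_props phi_lastidx by auto
  have hlT: "hl (BNode l r) = hl r @ hl l @ [l \<noteq> BLeaf]" by simp
  have i: "i < ?k + ?m + 1" using BNode.prems by simp
  show ?case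
  proof (cases "i < ?k")
    case True
    have "i - 1 < ?k" using True by arith
    then show ?thesis unfolding hlT w using BNode.IH(2)[OF True] True by (simp add: nth_append)
  next
    case nk: False
    show ?thesis
    proof (cases "i < ?k + ?m")
      case True
      define j where "j = i - ?k"
      have j: "j < ?m" "i = ?k + j" using True nk j_def by auto
      have wi: "?w ! i = phi l ! j + (?M - 1)" unfolding w using j by (simp add: nth_append)
      have hli: "hl (BNode l r) ! i = hl l ! j" unfolding hlT using j by (simp add: nth_append)
      show ?thesis
      proof (cases "j = 0")
        case True
        have ln: "l \<noteq> BLeaf" using j by auto
        have "\<not> hl l ! 0" using BNode.IH(1)[of 0] j True by simp
        moreover have "phi l ! 0 = 1" using phi_first[OF ln] .
        moreover have "0 < i \<Longrightarrow> ?w ! (i - 1) = ?M"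
        proof -
          assume "0 < i"
          then have "?k > 0" "i - 1 = ?k - 1" using j True by auto
          then have "?w ! (i - 1) = phi r ! (?k - 1)" unfolding w by (simp add: nth_append)
          moreover have "r \<noteq> BLeaf" using \<open>?k > 0\<close> by auto
          ultimately show ?thesis using Mp(3) by metis
        qed
        ultimately show ?thesis using hli wi True Mp by auto
      next
        case False
        have ii: "i - 1 = ?k + (j - 1)" "j - 1 < ?m" using j False by auto
        have wi1: "?w ! (i - 1) = phi l ! (j - 1) + (?M - 1)" unfolding w ii(1) using ii(2)
          by (simp add: nth_append)
        have "hl l ! j \<longleftrightarrow> phi l ! (j - 1) < phi l ! j" using BNode.IH(1)[OF j(1)] False by simp
        then show ?thesis using hli wi wi1 False j by auto
      qed
    next
      case False
      then have ie: "i = ?k + ?m" using i by simp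
      have wi: "?w ! i = ?m + ?M" unfolding w ie by (simp add: nth_append)
      have hli: "hl (BNode l r) ! i = (l \<noteq> BLeaf)" unfolding hlT ie by (simp add: nth_append)
      show ?thesis
      proof (cases "l = BLeaf")
        case False
        then have m0: "?m > 0" by (cases l) auto
        have ii: "?k + ?m - 1 = ?k + (?m - 1)" "?m - 1 < ?m" using m0 by auto
        have "?w ! (?k + (?m - 1)) = (map (\<lambda>x. x + (?M - 1)) (phi l) @ [?m + ?M]) ! (?m - 1)"
          by (metis w len_phi nth_append_length_plus)
        then have wi1: "?w ! (i - 1) = phi l ! (?m - 1) + (?M - 1)" unfolding ie ii(1) using ii(2)
          by (simp add: nth_append)
        have "phi l ! (?m - 1) \<le> ?m - 1 + 1" using phi_park[of l] m0 unfolding park_def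
          by (metis len_phi diff_less zero_less_one)
        then show ?thesis using wi wi1 hli False m0 ie Mp by auto
      next
        case True
        then have m0: "?m = 0" by simp
        have "0 < i \<Longrightarrow> ?w ! (i - 1) = ?M"
        proof -
          assume "0 < i"
          then have "?k > 0" "i - 1 = ?k - 1" using ie m0 by auto
          then have "?w ! (i - 1) = phi r ! (?k - 1)" unfolding w by (simp add: nth_append)
          moreover have "r \<noteq> BLeaf" using \<open>?k > 0\<close> by auto
          ultimately show ?thesis using Mp(3) by metis
        qed
        then show ?thesis using wi hli True m0 by auto
      qed
    qed
  qed
qed




declare phi.simps(2)[simp del]

definition ee :: "nat list \<Rightarrow> nat \<Rightarrow> int" where
  "ee w p = (if p = 0 then -1 else int p - int (w ! (p - 1)))"

lemma decomp:
  fixes l r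
  defines "w \<equiv> phi (BNode l r)"
  shows "ee w (bsize r) + 1 = ee w (length w)"
    and "\<And>p. bsize r < p \<Longrightarrow> p \<le> length w \<Longrightarrow> ee w p \<ge> ee w (length w)"
proof -
  let ?k = "bsize r" and ?m = "bsize l" and ?M = "Mof r"
  have w: "w = phi r @ map (\<lambda>x. x + (?M - 1)) (phi l) @ [?m + ?M]" unfolding w_def by (rule phi_BNode)
  have n: "length w = ?k + ?m + 1" unfolding w by simp
  have Mp: "1 \<le> ?M" "?M \<le> ?k + 1" "r \<noteq> BLeaf \<Longrightarrow> phi r ! (?k - 1) = ?M"
    using Mof_props phi_lastidx by auto
  have en: "ee w (length w) = int ?k + 1 - int ?M"
  proof -
    have "w ! (length w - 1) = ?m + ?M" unfolding w by (simp add: nth_append)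
    then show ?thesis unfolding ee_def n by simp
  qed
  have ek: "ee w ?k = int ?k - int ?M"
  proof (cases "?k = 0")
    case True
    then have "r = BLeaf" by (cases r) auto
    then show ?thesis using True unfolding ee_def Mof_def by simp
  next
    case False
    then have "r \<noteq> BLeaf" by auto
    moreover have "w ! (?k - 1) = phi r ! (?k - 1)" unfolding w using False by (simp add: nth_append)
    ultimately show ?thesis using False Mp(3) unfolding ee_def by simp
  qed
  show "ee w ?k + 1 = ee w (length w)" using en ek by simp
  fix p assume p: "?k < p" "p \<le> length w"
  show "ee w p \<ge> ee w (length w)"
  proof (cases "p = length w")
    case True then show ?thesis by simp
  next
    case False
    define j where "j = p - ?k - 1"
    have j: "j < ?m" "p - 1 = ?k + j" using p False n j_def by auto
    have "w ! (p - 1) = (map (\<lambda>x. x + (?M - 1)) (phi l) @ [?m + ?M]) ! j"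
      unfolding j(2) w by (metis len_phi nth_append_length_plus)
    then have wp: "w ! (p - 1) = phi l ! j + (?M - 1)" using j by (simp add: nth_append)
    have "phi l ! j \<le> j + 1" using phi_park[of l] j unfolding park_def by simp
    then show ?thesis using wp p j Mp en unfolding ee_def by auto
  qed
qed

lemma map_add_inj: "map (\<lambda>x. x + (c::nat)) xs = map (\<lambda>x. x + c) ys \<Longrightarrow> xs = ys"
  by (simp add: inj_def inj_map_eq_map)

lemma phi_inj: "phi T1 = phi T2 \<Longrightarrow> T1 = T2"
proof (induction T1 arbitrary: T2)
  case BLeaf
  then show ?case by (metis phi.simps(1) phi_nil_iff)
next
  case (BNode l r)
  have "length (phi T2) \<noteq> 0" using BNode.prems len_phi[of "BNode l r"] by simp
  then have "T2 \<noteq> BLeaf" by auto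
  then obtain l' r' where T2: "T2 = BNode l' r'" by (cases T2) auto
  define w where "w = phi (BNode l r)"
  have w2: "w = phi (BNode l' r')" using BNode.prems T2 w_def by simp
  have nl: "length w = bsize r + bsize l + 1" "length w = bsize r' + bsize l' + 1"
    using w_def w2 len_phi[of "BNode l r"] len_phi[of "BNode l' r'"] by (simp_all del: len_phi)
  have d1: "ee w (bsize r) + 1 = ee w (length w)"
    "\<And>p. bsize r < p \<Longrightarrow> p \<le> length w \<Longrightarrow> ee w p \<ge> ee w (length w)"
    using decomp[where l=l and r=r] w_def by auto
  have d2: "ee w (bsize r') + 1 = ee w (length w)"
    "\<And>p. bsize r' < p \<Longrightarrow> p \<le> length w \<Longrightarrow> ee w p \<ge> ee w (length w)"
    using decomp[where l=l' and r=r'] w2 by auto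
  have k: "bsize r = bsize r'"
  proof (rule ccontr)
    assume "bsize r \<noteq> bsize r'"
    then consider "bsize r < bsize r'" | "bsize r' < bsize r" by linarith
    then show False
    proof cases
      case 1 then show False using d1(2)[of "bsize r'"] d2(1) nl by auto
    next
      case 2 then show False using d2(2)[of "bsize r"] d1(1) nl by auto
    qed
  qed
  have e1: "w = phi r @ (map (\<lambda>x. x + (Mof r - 1)) (phi l) @ [bsize l + Mof r])"
    using w_def phi_BNode by simp
  have e2: "w = phi r' @ (map (\<lambda>x. x + (Mof r' - 1)) (phi l') @ [bsize l' + Mof r'])"
    using w2 phi_BNode by simp
  have "phi r = phi r'" and rest: "map (\<lambda>x. x + (Mof r - 1)) (phi l) @ [bsize l + Mof r]
     = map (\<lambda>x. x + (Mof r' - 1)) (phi l') @ [bsize l' + Mof r']"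
    using e1 e2 k by (metis append_eq_append_conv len_phi)+
  then have rr: "r = r'" using BNode.IH(2) by blast
  have "map (\<lambda>x. x + (Mof r - 1)) (phi l) = map (\<lambda>x. x + (Mof r - 1)) (phi l')"
    using rest rr by simp
  then have "phi l = phi l'" by (rule map_add_inj)
  then have "l = l'" using BNode.IH(1) by blast
  then show ?case using rr T2 by simp
qed




lemma sorted_take': "sorted w \<Longrightarrow> sorted (take k w)"
  using sorted_append[of "take k w" "drop k w"] by simp

lemma sorted_drop': "sorted w \<Longrightarrow> sorted (drop k w)"
  using sorted_append[of "take k w" "drop k w"] by simp

lemma park_take: "park w \<Longrightarrow> park (take k w)"
  unfolding park_def using sorted_take' by auto

lemma ee_step: "park w \<Longrightarrow> p + 1 \<le> length w \<Longrightarrow> ee w (p + 1) \<le> ee w p + 1"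
proof (cases "p = 0")
  case True
  assume "park w" "p + 1 \<le> length w"
  then have "\<forall>i<length w. 1 \<le> w ! i" "0 < length w" unfolding park_def by auto
  then have "1 \<le> w ! 0" by blast
  then show ?thesis using True unfolding ee_def by simp
next
  case False
  assume pw: "park w" "p + 1 \<le> length w"
  then have "w ! (p - 1) \<le> w ! p" unfolding park_def using False
    by (simp add: sorted_nth_mono)
  then show ?thesis using False unfolding ee_def by simp
qed

lemma phi_surj: "park w \<Longrightarrow> \<exists>T. phi T = w"
proof (induction "length w" arbitrary: w rule: less_induct)
  case less
  show ?case
  proof (cases "w = []")
    case True then show ?thesis by (intro exI[of _ BLeaf]) simp
  next
    case False
    define n where "n = length w"
    have n0: "n > 0" using False n_def by simp
    have pw: "park w" by fact
    have sw: "sorted w" and bw: "\<And>i. i < n \<Longrightarrow> 1 \<le> w ! i \<and> w ! i \<le> i + 1"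
      using pw unfolding park_def n_def by auto
    define S where "S = {p. p < n \<and> ee w p < ee w n}"
    have en0: "ee w n \<ge> 0" using bw[of "n - 1"] n0 unfolding ee_def by simp
    have "0 \<in> S" unfolding S_def using n0 en0 by (simp add: ee_def)
    have fS: "finite S" unfolding S_def by simp
    define k where "k = Max S"
    have kS: "k \<in> S" using fS \<open>0 \<in> S\<close> k_def Max_in by blast
    then have kn: "k < n" and ek: "ee w k < ee w n" unfolding S_def by auto
    have kmax: "\<And>p. k < p \<Longrightarrow> p < n \<Longrightarrow> ee w p \<ge> ee w n"
    proof -
      fix p assume "k < p" "p < n"
      show "ee w p \<ge> ee w n"
      proof (rule ccontr)
        assume "\<not> ee w p \<ge> ee w n"
        then have "p \<in> S" unfolding S_def using \<open>p < n\<close> by simp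
        then have "p \<le> k" using fS k_def by simp
        then show False using \<open>k < p\<close> by simp
      qed
    qed
    have ekn: "ee w n = ee w k + 1"
    proof (cases "k + 1 = n")
      case True
      then show ?thesis using ee_step[OF pw, of k] ek n_def by simp
    next
      case False
      then have "k + 1 < n" using kn by simp
      then show ?thesis using ee_step[OF pw, of k] ek kmax[of "k+1"] n_def by simp
    qed
    define M where "M = (if k = 0 then 1 else w ! (k - 1))"
    have M1: "1 \<le> M" using M_def bw kn by auto
    have ekM: "ee w k = int k - int M" unfolding ee_def M_def by simp
    define m where "m = n - 1 - k"
    have nkm: "n = k + m + 1" using kn m_def by simp
    have cw: "w ! (n - 1) = m + M"
    proof -
      have "ee w n = int n - int (w ! (n - 1))" unfolding ee_def using n0 by simp
      then show ?thesis using ekn ekM nkm by simp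
    qed
    define A where "A = take k w"
    define B where "B = take m (drop k w)"
    have wABc: "w = A @ B @ [m + M]"
    proof -
      have "w = take k w @ drop k w" by simp
      moreover have "drop k w = take m (drop k w) @ [w ! (n - 1)]"
      proof -
        have "length (drop k w) = m + 1" using nkm n_def by simp
        have "drop k w = take m (drop k w) @ drop m (drop k w)" by (rule append_take_drop_id[symmetric])
        moreover have "drop m (drop k w) = [w ! (n - 1)]"
        proof -
          have "drop (n - 1) w = [w ! (n - 1)]"
            using Cons_nth_drop_Suc[of "n - 1" w] n0 n_def by simp
          moreover have "drop m (drop k w) = drop (n - 1) w" using nkm by (simp add: add.commute)
          ultimately show ?thesis by simp
        qed
        ultimately show ?thesis by simp
      qed
      ultimately show ?thesis unfolding A_def B_def using cw by metis
    qed
    have lA: "length A = k" and lB: "length B = m" using nkm n_def A_def B_def by auto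
    have pA: "park A" unfolding A_def by (rule park_take[OF pw])
    have lastA: "A \<noteq> [] \<Longrightarrow> last A = M"
      using lA kn n_def unfolding M_def A_def by (simp add: last_conv_nth)
    have Bj: "\<And>j. j < m \<Longrightarrow> B ! j = w ! (k + j)" unfolding B_def using nkm n_def by simp
    have Blo: "\<And>j. j < m \<Longrightarrow> M \<le> B ! j"
    proof -
      fix j assume j: "j < m"
      show "M \<le> B ! j"
      proof (cases "k = 0")
        case True
        then have "M = 1" "B ! j = w ! j" using M_def Bj j by auto
        moreover have "j < n" using j nkm by simp
        ultimately show ?thesis using bw by simp
      next
        case False
        then have "w ! (k - 1) \<le> w ! (k + j)" using sw j nkm n_def by (simp add: sorted_nth_mono)
        then show ?thesis using M_def Bj j False by simp
      qed
    qed
    have Bhi: "\<And>j. j < m \<Longrightarrow> B ! j \<le> j + M"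
    proof -
      fix j assume j: "j < m"
      have "ee w (k + j + 1) \<ge> ee w n" using kmax[of "k + j + 1"] j nkm by simp
      then have "int (k + j + 1) - int (w ! (k + j)) \<ge> int k - int M + 1"
        using ekn ekM unfolding ee_def by simp
      then show "B ! j \<le> j + M" using Bj j by simp
    qed
    define L where "L = map (\<lambda>x. x - (M - 1)) B"
    have sB: "sorted B" unfolding B_def using sw sorted_take' sorted_drop' by blast
    have pL: "park L"
    proof -
      have "sorted L" unfolding L_def using sB by (auto simp: sorted_iff_nth_mono diff_le_mono)
      moreover have "\<forall>i<length L. 1 \<le> L ! i \<and> L ! i \<le> i + 1"
      proof (intro allI impI)
        fix i assume "i < length L"
        then have i: "i < m" using lB L_def by simp
        have "L ! i = B ! i - (M - 1)" using i lB L_def by simp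
        then show "1 \<le> L ! i \<and> L ! i \<le> i + 1" using Blo[OF i] Bhi[OF i] M1 by linarith
      qed
      ultimately show ?thesis unfolding park_def by simp
    qed
    have BL: "map (\<lambda>x. x + (M - 1)) L = B"
    proof (rule nth_equalityI)
      show "length (map (\<lambda>x. x + (M - 1)) L) = length B" unfolding L_def by simp
      fix i assume "i < length (map (\<lambda>x. x + (M - 1)) L)"
      then have i: "i < m" using lB L_def by simp
      have "M \<le> B ! i" using Blo[OF i] .
      then show "map (\<lambda>x. x + (M - 1)) L ! i = B ! i" using i lB M1 unfolding L_def by simp
    qed
    obtain r where r: "phi r = A" using less.hyps[of A] pA lA kn n_def by blast
    have "length L < length w" using lB nkm n_def L_def by simp
    then obtain l where l: "phi l = L" using less.hyps[of L] pL by blast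
    have Mr: "Mof r = M"
    proof (cases "k = 0")
      case True
      then have "r = BLeaf" using r lA phi_nil_iff by auto
      then show ?thesis unfolding Mof_def M_def using True by simp
    next
      case False
      then have "r \<noteq> BLeaf" using r lA phi_nil_iff by auto
      then show ?thesis unfolding Mof_def using lastA r lA False by auto
    qed
    have "bsize l = m" using l lB L_def len_phi by (metis length_map)
    then have "phi (BNode l r) = w" using phi_BNode[of l r] r l Mr BL wABc by simp
    then show ?thesis by blast
  qed
qed




fun build :: "btree \<Rightarrow> bool list \<Rightarrow> mtree" where
  "build BLeaf bs = MLeaf"
| "build (BNode l r) bs = MNode (bs ! (bsize r + bsize l))
     (build l (take (bsize l) (drop (bsize r) bs))) (build r (take (bsize r) bs))"

lemma forget_build[simp]: "forget (build T bs) = T"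
  by (induction T arbitrary: bs) auto

lemma len_marks[simp]: "length (marks T) = bsize (forget T)"
  by (induction T) auto

lemma marks_build: "length bs = bsize T \<Longrightarrow> marks (build T bs) = bs"
proof (induction T arbitrary: bs)
  case BLeaf then show ?case by simp
next
  case (BNode l r)
  let ?k = "bsize r" and ?m = "bsize l"
  have "marks (build (BNode l r) bs) = take ?k bs @ take ?m (drop ?k bs) @ [bs ! (?k + ?m)]"
    using BNode by simp
  also have "\<dots> = bs"
  proof -
    have "drop ?m (drop ?k bs) = [bs ! (?k + ?m)]"
    proof -
      have "drop (?k + ?m) bs = [bs ! (?k + ?m)]"
        using Cons_nth_drop_Suc[of "?k + ?m" bs] BNode.prems by simp
      then show ?thesis by (simp add: add.commute)
    qed
    then have "take ?m (drop ?k bs) @ [bs ! (?k + ?m)] = drop ?k bs"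
      by (metis append_take_drop_id)
    then show ?thesis by simp
  qed
  finally show ?case .
qed

lemma hl_marks: "length bs = bsize T \<Longrightarrow> (\<forall>i<bsize T. bs ! i \<longrightarrow> hl T ! i) \<Longrightarrow> valid (build T bs)"
proof (induction T arbitrary: bs)
  case BLeaf then show ?case by simp
next
  case (BNode l r)
  let ?k = "bsize r" and ?m = "bsize l"
  have root: "bs ! (?k + ?m) \<longrightarrow> l \<noteq> BLeaf"
  proof
    assume "bs ! (?k + ?m)"
    then have "hl (BNode l r) ! (?k + ?m)" using BNode.prems by auto
    then show "l \<noteq> BLeaf" by (simp add: nth_append)
  qed
  have vl: "valid (build l (take ?m (drop ?k bs)))"
  proof (rule BNode.IH(1))
    show "length (take ?m (drop ?k bs)) = ?m" using BNode.prems by simp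
    show "\<forall>i<?m. take ?m (drop ?k bs) ! i \<longrightarrow> hl l ! i"
    proof (intro allI impI)
      fix i assume i: "i < ?m" and b: "take ?m (drop ?k bs) ! i"
      then have "bs ! (?k + i)" using BNode.prems by simp
      then have "hl (BNode l r) ! (?k + i)" using BNode.prems i by simp
      then show "hl l ! i" using i by (simp add: nth_append)
    qed
  qed
  have vr: "valid (build r (take ?k bs))"
  proof (rule BNode.IH(2))
    show "length (take ?k bs) = ?k" using BNode.prems by simp
    show "\<forall>i<?k. take ?k bs ! i \<longrightarrow> hl r ! i"
    proof (intro allI impI)
      fix i assume i: "i < ?k" and b: "take ?k bs ! i"
      then have "bs ! i" by simp
      then have "hl (BNode l r) ! i" using BNode.prems i by simp
      then show "hl r ! i" using i by (simp add: nth_append)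
    qed
  qed
  have "build l (take ?m (drop ?k bs)) = MLeaf \<longleftrightarrow> l = BLeaf"
    by (cases l) auto
  then show ?case using root vl vr by simp
qed

lemma valid_marks_hl: "valid T \<Longrightarrow> i < length (marks T) \<Longrightarrow> marks T ! i \<Longrightarrow> hl (forget T) ! i"
proof (induction T arbitrary: i)
  case MLeaf then show ?case by simp
next
  case (MNode b l r)
  let ?k = "bsize (forget r)" and ?m = "bsize (forget l)"
  have i: "i < ?k + ?m + 1" using MNode.prems by simp
  consider "i < ?k" | "?k \<le> i \<and> i < ?k + ?m" | "i = ?k + ?m" using i by linarith
  then show ?case
  proof cases
    case 1 then show ?thesis using MNode by (simp add: nth_append)
  next
    case 2
    then have lt: "i - ?k < ?m" by linarith
    then have "marks l ! (i - ?k)" using MNode.prems 2 by (simp add: nth_append)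
    then have "hl (forget l) ! (i - ?k)" using MNode 2 by auto
    then show ?thesis using 2 lt by (simp add: nth_append)
  next
    case 3
    then have "b" using MNode.prems by (simp add: nth_append)
    then have "l \<noteq> MLeaf" using MNode.prems by simp
    then have "forget l \<noteq> BLeaf" by (cases l) auto
    then show ?thesis using 3 by (simp add: nth_append)
  qed
qed

lemma mtree_eq: "forget T1 = forget T2 \<Longrightarrow> marks T1 = marks T2 \<Longrightarrow> T1 = T2"
proof (induction T1 arbitrary: T2)
  case MLeaf then show ?case by (cases T2) auto
next
  case (MNode b l r)
  then obtain b' l' r' where T2: "T2 = MNode b' l' r'" by (cases T2) auto
  have f: "forget l = forget l'" "forget r = forget r'" using MNode.prems T2 by auto
  have "marks r @ marks l @ [b] = marks r' @ marks l' @ [b']" using MNode.prems T2 by simp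
  moreover have "length (marks r) = length (marks r')" "length (marks l) = length (marks l')"
    using f by simp_all
  ultimately have "marks r = marks r'" "marks l = marks l'" "b = b'" by auto
  then show ?case using MNode.IH f T2 by simp
qed

lemma phiM_bij: "bij_betw phiM {T. valid T \<and> bsize (forget T) = n} {(w, B). parking_quasi_ribbon n w B}"
proof (rule bij_betw_imageI)
  show "inj_on phiM {T. valid T \<and> bsize (forget T) = n}"
  proof (rule inj_onI)
    fix T1 T2 assume "T1 \<in> {T. valid T \<and> bsize (forget T) = n}" "T2 \<in> {T. valid T \<and> bsize (forget T) = n}"
      and e: "phiM T1 = phiM T2"
    then have f: "forget T1 = forget T2" using phi_inj unfolding phiM_def by simp
    have s: "{i. i < length (marks T1) \<and> marks T1 ! i} = {i. i < length (marks T2) \<and> marks T2 ! i}"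
      using e unfolding phiM_def by simp
    have "marks T1 = marks T2"
    proof (rule nth_equalityI)
      show "length (marks T1) = length (marks T2)" using f by simp
      fix i assume "i < length (marks T1)"
      then show "marks T1 ! i = marks T2 ! i" using s f by (auto simp: set_eq_iff)
    qed
    then show "T1 = T2" using f mtree_eq by blast
  qed
  show "phiM ` {T. valid T \<and> bsize (forget T) = n} = {(w, B). parking_quasi_ribbon n w B}"
  proof
    show "phiM ` {T. valid T \<and> bsize (forget T) = n} \<subseteq> {(w, B). parking_quasi_ribbon n w B}"
    proof
      fix x assume "x \<in> phiM ` {T. valid T \<and> bsize (forget T) = n}"
      then obtain T where T: "valid T" "bsize (forget T) = n" and x: "x = phiM T" by blast
      have np: "nd_parking n (phi (forget T))" using nd_parking_park phi_park T by simp
      have "{i. i < length (marks T) \<and> marks T ! i} \<subseteq>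
          {i. 0 < i \<and> i < n \<and> phi (forget T) ! (i - 1) < phi (forget T) ! i}"
      proof
        fix i assume "i \<in> {i. i < length (marks T) \<and> marks T ! i}"
        then have i: "i < length (marks T)" "marks T ! i" by auto
        then have "hl (forget T) ! i" using valid_marks_hl T by blast
        then show "i \<in> {i. 0 < i \<and> i < n \<and> phi (forget T) ! (i - 1) < phi (forget T) ! i}"
          using hl_char[of i "forget T"] i T by simp
      qed
      then show "x \<in> {(w, B). parking_quasi_ribbon n w B}"
        using np x unfolding phiM_def parking_quasi_ribbon_def by simp
    qed
  next
    show "{(w, B). parking_quasi_ribbon n w B} \<subseteq> phiM ` {T. valid T \<and> bsize (forget T) = n}"
    proof
      fix x assume "x \<in> {(w, B). parking_quasi_ribbon n w B}"
      then obtain w B where x: "x = (w, B)" and q: "parking_quasi_ribbon n w B" by blast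
      have pw: "park w" "length w = n" using q nd_parking_park unfolding parking_quasi_ribbon_def by auto
      have Bs: "B \<subseteq> {i. 0 < i \<and> i < n \<and> w ! (i - 1) < w ! i}" using q unfolding parking_quasi_ribbon_def by simp
      obtain T0 where T0: "phi T0 = w" using phi_surj pw(1) by blast
      have n: "bsize T0 = n" using T0 pw len_phi by metis
      define bs where "bs = map (\<lambda>i. i \<in> B) [0..<n]"
      have lbs: "length bs = bsize T0" using bs_def n by simp
      have hb: "\<forall>i<bsize T0. bs ! i \<longrightarrow> hl T0 ! i"
      proof (intro allI impI)
        fix i assume i: "i < bsize T0" and "bs ! i"
        then have "i \<in> B" using bs_def n by simp
        then have "0 < i \<and> w ! (i - 1) < w ! i" using Bs by auto
        then show "hl T0 ! i" using hl_char[OF i] T0 by simp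
      qed
      define T where "T = build T0 bs"
      have vT: "valid T" "bsize (forget T) = n" using hl_marks[OF lbs hb] T_def n by auto
      have mT: "marks T = bs" using marks_build[OF lbs] T_def by simp
      have "{i. i < length bs \<and> bs ! i} = B" using Bs bs_def by auto
      then have "phiM T = (w, B)" unfolding phiM_def using mT T_def T0 by simp
      then have "x = phiM T" using x by simp
      then show "x \<in> phiM ` {T. valid T \<and> bsize (forget T) = n}" using vT by blast
    qed
  qed
qed

theorem mainTheorem3:
  fixes n :: nat
  assumes "1 \<le> n"
  shows "bij_betw Phi {t. reduced t \<and> leaves t = n + 1}
           {(w, B). parking_quasi_ribbon n w B}"
proof -
  have "Phi = phiM \<circ> theta" by (rule ext) (simp add: Phi_def)
  then show ?thesis using bij_betw_trans[OF theta_bij phiM_bij] by simp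
qed


end
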